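(* The map $\pi^{Syz}_p$ is surjective for all $p\ge 2$ if and only if, for all $p\ge 2$, $\partial_K(R_{\ge p})=M\cap I_F^p$; and in that case $I_K^p\cong I_F^p/\partial_K(R_{\ge p})$ for all $p\ge 2$.
   Context: Let $K$ be an augmented unital $\mathbb{Q}$-algebra generated by a set $X$, $F$ the free unital $\mathbb{Q}$-algebra on $X$, and $I_F\subseteq F$, $I_K\subseteq K$ the kernels of the algebra maps sending each $x\in X$ to $1$. Let $\tilde X=\mathbb{Q}\{x-1:x\in X\}$, so $F=T\tilde X=\bigoplus_{p}\tilde X^p$ ($\tilde X^p$ spanned by $p$-fold products) and $I_F^p=\bigoplus_{q\ge p}\tilde X^q$. Let $M\subseteq I_F$ be a two-sided ideal with $K=F/M$, so $I_K=I_F/M$. $K$ and $F$ are replaced throughout by their completions with respect to the filtrations by powers of their augmentation ideals, and it is assumed that $M\subseteq I_F^2$. Let $\{y_q:q\in Q\}\subseteq I_F^2$ generate $M$ as a two-sided ideal, let $Y_F=\{Y_q\}$ be symbols in bijection with them, let $R$ be the free two-sided $F$-module on $Y_F$, and $\partial_K:R\to F$ the bimodule map $Y_q\mapsto y_q$. Grade $R$ by $R_p=\sum_{q=0}^{p-2}\tilde X^q\cdot\mathbb{Q}Y_F\cdot\tilde X^{p-q-2}$ and set $R_{\ge p}=\bigoplus_{q\ge p}R_q$, so $\partial_K(R_{\ge p})\subseteq M\cap I_F^p$. Let $\pi^0_p:I_F^p\to\tilde X^p$ and $\pi^1_p:R_{\ge p}\to R_p$ be the projections onto the degree-$p$ components,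 and $\partial_A:R_p\to\tilde X^p$, $\partial_A=\pi^0_p\circ\partial_K$. Define $\pi^{Syz}_p:\ker(\partial_K|_{R_{\ge p}})\to\ker(\partial_A|_{R_p})$ as the map induced by $\pi^1_p$. *)

theory Defs
  imports Complex_Main
begin

text \<open>Completed free unital Q-algebra on the generating set (the type 'x), in the
  basis of words in the elements x-1: a word u = [x1,...,xn] stands for the monomial
  (x1-1)...(xn-1) in tilde-X^n. The completion with respect to the I_F-adic filtration
  is the product over p of the components tilde-X^p, i.e. series whose coefficients on
  words of each fixed length are finitely supported.\<close>

type_synonym 'x ser = "'x list \<Rightarrow> rat"

definition Fc :: "'x ser set" where
  "Fc = {f. \<forall>n. finite {w. length w = n \<and> f w \<noteq> 0}}"

definition fmult :: "'x ser \<Rightarrow> 'x ser \<Rightarrow> 'x ser" where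
  "fmult f g = (\<lambda>w. \<Sum>i\<in>{0..length w}. f (take i w) * g (drop i w))"

definition mono :: "'x list \<Rightarrow> 'x ser" where
  "mono u = (\<lambda>w. if w = u then 1 else 0)"

definition IF :: "nat \<Rightarrow> 'x ser set" where
  "IF p = {f \<in> Fc. \<forall>w. length w < p \<longrightarrow> f w = 0}"

definition pi0 :: "nat \<Rightarrow> 'x ser \<Rightarrow> 'x ser" where
  "pi0 p f = (\<lambda>w. if length w = p then f w else 0)"

text \<open>Completed free F-bimodule R on symbols Y_q: the basis element (u,q,v) stands for
  u * Y_q * v and has degree |u| + |v| + 2.\<close>

type_synonym ('x,'q) rser = "'x list \<times> 'q \<times> 'x list \<Rightarrow> rat"

fun rdeg :: "'x list \<times> 'q \<times> 'x list \<Rightarrow> nat" where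
  "rdeg (u, q, v) = length u + length v + 2"

definition Rc :: "('x,'q) rser set" where
  "Rc = {r. \<forall>n. finite {t. rdeg t = n \<and> r t \<noteq> 0}}"

definition Rge :: "nat \<Rightarrow> ('x,'q) rser set" where
  "Rge p = {r \<in> Rc. \<forall>t. rdeg t < p \<longrightarrow> r t = 0}"

definition Rdeg :: "nat \<Rightarrow> ('x,'q) rser set" where
  "Rdeg p = {r \<in> Rc. \<forall>t. rdeg t \<noteq> p \<longrightarrow> r t = 0}"

definition pi1 :: "nat \<Rightarrow> ('x,'q) rser \<Rightarrow> ('x,'q) rser" where
  "pi1 p r = (\<lambda>t. if rdeg t = p then r t else 0)"

text \<open>Since y_q lies in I_F^2, only the
  finitely many basis elements of degree <= |w| contribute to the coefficient of w.\<close>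
definition dK :: "('q \<Rightarrow> 'x ser) \<Rightarrow> ('x,'q) rser \<Rightarrow> 'x ser" where
  "dK y r = (\<lambda>w. \<Sum>t\<in>{t. rdeg t \<le> length w \<and> r t \<noteq> 0}.
      (case t of (u, q, v) \<Rightarrow> r t * fmult (fmult (mono u) (y q)) (mono v) w))"

definition dA :: "('q \<Rightarrow> 'x ser) \<Rightarrow> nat \<Rightarrow> ('x,'q) rser \<Rightarrow> 'x ser" where
  "dA y p r = pi0 p (dK y r)"

text \<open>M = partial_K(R), the (closed) two-sided ideal generated by the y_q.\<close>
definition Mid :: "('q \<Rightarrow> 'x ser) \<Rightarrow> 'x ser set" where
  "Mid y = dK y ` Rc"

definition SyzK :: "('q \<Rightarrow> 'x ser) \<Rightarrow> nat \<Rightarrow> ('x,'q) rser set" where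
  "SyzK y p = {r \<in> Rge p. dK y r = (\<lambda>_. 0)}"

definition SyzA :: "('q \<Rightarrow> 'x ser) \<Rightarrow> nat \<Rightarrow> ('x,'q) rser set" where
  "SyzA y p = {s \<in> Rdeg p. dA y p s = (\<lambda>_. 0)}"

definition piSyz_surj :: "('q \<Rightarrow> 'x ser) \<Rightarrow> nat \<Rightarrow> bool" where
  "piSyz_surj y p \<longleftrightarrow> pi1 p ` SyzK y p = SyzA y p"

definition Kcls :: "('q \<Rightarrow> 'x ser) \<Rightarrow> 'x ser \<Rightarrow> 'x ser set" where
  "Kcls y f = {g \<in> Fc. (\<lambda>w. g w - f w) \<in> Mid y}"

definition IK :: "('q \<Rightarrow> 'x ser) \<Rightarrow> nat \<Rightarrow> 'x ser set set" where
  "IK y p = Kcls y ` IF p"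

definition Dcls :: "('q \<Rightarrow> 'x ser) \<Rightarrow> nat \<Rightarrow> 'x ser \<Rightarrow> 'x ser set" where
  "Dcls y p f = {g \<in> IF p. (\<lambda>w. g w - f w) \<in> dK y ` Rge p}"

definition IFquot :: "('q \<Rightarrow> 'x ser) \<Rightarrow> nat \<Rightarrow> 'x ser set set" where
  "IFquot y p = Dcls y p ` IF p"

end

theory Submission
  imports Defs
begin

definition cf :: "('q \<Rightarrow> 'x ser) \<Rightarrow> 'x list \<times> 'q \<times> 'x list \<Rightarrow> 'x ser" where
  "cf y t = (case t of (u, q, v) \<Rightarrow> fmult (fmult (mono u) (y q)) (mono v))"

lemma rdeg_ge2: "rdeg t \<ge> 2"
  by (cases t) auto

lemma Rc_fin: assumes "r \<in> Rc" shows "finite {t. rdeg t \<le> n \<and> r t \<noteq> 0}"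
proof -
  have "{t. rdeg t \<le> n \<and> r t \<noteq> 0} = (\<Union>k\<in>{..n}. {t. rdeg t = k \<and> r t \<noteq> 0})" by auto
  thus ?thesis using assms unfolding Rc_def by auto
qed

lemma dK_alt: "dK y r w = (\<Sum>t\<in>{t. rdeg t \<le> length w \<and> r t \<noteq> 0}. r t * cf y t w)"
  unfolding dK_def cf_def
  by (rule sum.cong) (auto split: prod.splits)

lemma dK_sum:
  assumes "r \<in> Rc" "finite A" "{t. rdeg t \<le> length w \<and> r t \<noteq> 0} \<subseteq> A"
    "A \<subseteq> {t. rdeg t \<le> length w}"
  shows "dK y r w = (\<Sum>t\<in>A. r t * cf y t w)"
  unfolding dK_alt
  by (rule sum.mono_neutral_left) (use assms in auto)

lemma Rc_diff: "r1 \<in> Rc \<Longrightarrow> r2 \<in> Rc \<Longrightarrow> (\<lambda>t. r1 t - r2 t) \<in> Rc"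
  unfolding Rc_def
proof (safe)
  fix n assume a: "\<forall>n. finite {t. rdeg t = n \<and> r1 t \<noteq> 0}" "\<forall>n. finite {t. rdeg t = n \<and> r2 t \<noteq> 0}"
  have "{t. rdeg t = n \<and> r1 t - r2 t \<noteq> 0} \<subseteq> {t. rdeg t = n \<and> r1 t \<noteq> 0} \<union> {t. rdeg t = n \<and> r2 t \<noteq> 0}"
    by auto
  thus "finite {t. rdeg t = n \<and> r1 t - r2 t \<noteq> 0}" using a by (meson finite_UnI rev_finite_subset)
qed

lemma dK_diff:
  fixes r1 r2 :: "('x,'q) rser" and y :: "'q \<Rightarrow> 'x ser"
  assumes "r1 \<in> Rc" "r2 \<in> Rc"
  shows "dK y (\<lambda>t. r1 t - r2 t) = (\<lambda>w. dK y r1 w - dK y r2 w)"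
proof
  fix w :: "'x list"
  let ?A = "{t. rdeg t \<le> length w \<and> r1 t \<noteq> 0} \<union> {t. rdeg t \<le> length w \<and> r2 t \<noteq> 0}"
  have f: "finite ?A" using Rc_fin assms by blast
  have "dK y (\<lambda>t. r1 t - r2 t) w = (\<Sum>t\<in>?A. (r1 t - r2 t) * cf y t w)"
    by (rule dK_sum[OF Rc_diff[OF assms] f]) auto
  also have "\<dots> = (\<Sum>t\<in>?A. r1 t * cf y t w) - (\<Sum>t\<in>?A. r2 t * cf y t w)"
    by (simp add: left_diff_distrib sum_subtractf)
  also have "\<dots> = dK y r1 w - dK y r2 w"
    using dK_sum[OF assms(1) f, where w=w and y=y] dK_sum[OF assms(2) f, where w=w and y=y] by (simp add: subset_iff)
  finally show "dK y (\<lambda>t. r1 t - r2 t) w = dK y r1 w - dK y r2 w" .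
qed

lemma dK_zero: "dK y (\<lambda>_. 0) = (\<lambda>_. 0)"
  unfolding dK_def by auto

lemma dK_vanish: "r \<in> Rge p \<Longrightarrow> length w < p \<Longrightarrow> dK y r w = 0"
  unfolding dK_def Rge_def
  by (rule sum.neutral) auto

lemma fmult_Fc: assumes "f \<in> Fc" "g \<in> Fc" shows "fmult f g \<in> Fc"
  unfolding Fc_def
proof safe
  fix n
  have "{w. length w = n \<and> fmult f g w \<noteq> 0} \<subseteq>
    (\<lambda>(a,b). a @ b) ` (\<Union>i\<in>{..n}. {a. length a = i \<and> f a \<noteq> 0} \<times> {b. length b = n - i \<and> g b \<noteq> 0})"
  proof
    fix w assume "w \<in> {w. length w = n \<and> fmult f g w \<noteq> 0}"
    hence l: "length w = n" and nz: "(\<Sum>i\<in>{0..length w}. f (take i w) * g (drop i w)) \<noteq> 0"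
      unfolding fmult_def by auto
    from nz obtain i where i: "i \<in> {0..length w}" "f (take i w) * g (drop i w) \<noteq> 0"
      by (meson sum.neutral)
    show "w \<in> (\<lambda>(a,b). a @ b) ` (\<Union>i\<in>{..n}. {a. length a = i \<and> f a \<noteq> 0} \<times> {b. length b = n - i \<and> g b \<noteq> 0})"
      using i l by (intro image_eqI[of _ _ "(take i w, drop i w)"]) auto
  qed
  moreover have "finite (\<Union>i\<in>{..n}. {a. length a = i \<and> f a \<noteq> 0} \<times> {b. length b = n - i \<and> g b \<noteq> 0})"
    using assms unfolding Fc_def by auto
  ultimately show "finite {w. length w = n \<and> fmult f g w \<noteq> 0}"
    by (meson finite_imageI rev_finite_subset)
qed

lemma mono_Fc: "mono u \<in> Fc"
proof -
  have "\<And>n. {w. length w = n \<and> mono u w \<noteq> 0} \<subseteq> {u}" unfolding mono_def by auto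
  hence "\<And>n. finite {w. length w = n \<and> mono u w \<noteq> 0}" by (rule finite_subset) simp
  thus ?thesis unfolding Fc_def by blast
qed

lemma cf_Fc: "(\<forall>q. y q \<in> Fc) \<Longrightarrow> cf y t \<in> Fc"
  unfolding cf_def by (cases t) (auto intro!: fmult_Fc mono_Fc)

lemma dK_Fc:
  assumes y: "\<forall>q. y q \<in> Fc" and r: "r \<in> Rc"
  shows "dK y r \<in> Fc"
  unfolding Fc_def
proof safe
  fix n
  let ?T = "{t. rdeg t \<le> n \<and> r t \<noteq> 0}"
  have "{w. length w = n \<and> dK y r w \<noteq> 0} \<subseteq> (\<Union>t\<in>?T. {w. length w = n \<and> cf y t w \<noteq> 0})"
  proof
    fix w assume "w \<in> {w. length w = n \<and> dK y r w \<noteq> 0}"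
    hence l: "length w = n" and "dK y r w \<noteq> 0" by auto
    hence nz: "(\<Sum>t\<in>?T. r t * cf y t w) \<noteq> 0" using dK_alt[of y r w] by simp
    from nz obtain t where t1: "t \<in> ?T" and t2: "r t * cf y t w \<noteq> 0" by (meson sum.neutral)
    have "w \<in> {w. length w = n \<and> cf y t w \<noteq> 0}" using l t2 by simp
    thus "w \<in> (\<Union>t\<in>?T. {w. length w = n \<and> cf y t w \<noteq> 0})" using t1 by (rule UN_I[rotated])
  qed
  moreover have "finite (\<Union>t\<in>?T. {w. length w = n \<and> cf y t w \<noteq> 0})"
  proof (rule finite_UN_I[OF Rc_fin[OF r]])
    fix t show "finite {w. length w = n \<and> cf y t w \<noteq> 0}"
      using cf_Fc[OF y, of t] unfolding Fc_def by blast
  qed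
  ultimately show "finite {w. length w = n \<and> dK y r w \<noteq> 0}" by (rule finite_subset)
qed
lemma Rge_Rc: "r \<in> Rge p \<Longrightarrow> r \<in> Rc" unfolding Rge_def by auto

lemma Rc_Rge2: "Rc = Rge 2"
proof -
  have "\<And>t. \<not> rdeg t < 2" using rdeg_ge2 not_less by blast
  thus ?thesis unfolding Rge_def by blast
qed

lemma pi1_Rdeg: "r \<in> Rc \<Longrightarrow> pi1 p r \<in> Rdeg p"
  unfolding Rdeg_def Rc_def pi1_def
proof safe
  fix n assume "\<forall>n. finite {t. rdeg t = n \<and> r t \<noteq> 0}"
  thus "finite {t. rdeg t = n \<and> (if rdeg t = p then r t else 0) \<noteq> 0}"
    by (rule_tac rev_finite_subset[of "{t. rdeg t = n \<and> r t \<noteq> 0}"]) auto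
qed auto

lemma Rdeg_Rc: "r \<in> Rdeg p \<Longrightarrow> r \<in> Rc" unfolding Rdeg_def by auto

lemma pi1_Rc: "r \<in> Rc \<Longrightarrow> pi1 p r \<in> Rc" using pi1_Rdeg Rdeg_Rc by blast

lemma Rge_diff_pi1:
  fixes r :: "('x,'q) rser"
  assumes r: "r \<in> Rge p" shows "(\<lambda>t. r t - pi1 p r t) \<in> Rge (Suc p)"
proof -
  have "(\<lambda>t. r t - pi1 p r t) \<in> Rc" using Rc_diff pi1_Rc Rge_Rc r by blast
  moreover have "\<forall>t. rdeg t < Suc p \<longrightarrow> r t - pi1 p r t = 0"
  proof (intro allI impI)
    fix t :: "'x list \<times> 'q \<times> 'x list" assume "rdeg t < Suc p"
    hence "rdeg t < p \<or> rdeg t = p" by linarith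
    thus "r t - pi1 p r t = 0"
    proof
      assume "rdeg t < p"
      hence "r t = 0" using r unfolding Rge_def by blast
      thus ?thesis unfolding pi1_def by simp
    next
      assume "rdeg t = p" thus ?thesis unfolding pi1_def by simp
    qed
  qed
  ultimately show ?thesis unfolding Rge_def by blast
qed

lemma dK_IF: assumes "\<forall>q. y q \<in> Fc" "r \<in> Rge p" shows "dK y r \<in> IF p"
proof -
  have "dK y r \<in> Fc" using dK_Fc[OF assms(1) Rge_Rc[OF assms(2)]] .
  moreover have "\<forall>w. length w < p \<longrightarrow> dK y r w = 0" using dK_vanish[OF assms(2)] by blast
  ultimately show ?thesis unfolding IF_def by blast
qed

lemma pi1_eq: "pi1 p r = (\<lambda>t. r t - (\<lambda>t. r t - pi1 p r t) t)" by simp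

lemma dK_pi1_deg:
  assumes "r \<in> Rge p" "length w = p"
  shows "dK y (pi1 p r) w = dK y r w"
proof -
  have rc: "r \<in> Rc" using Rge_Rc[OF assms(1)] .
  have e: "dK y (\<lambda>t. r t - (\<lambda>t. r t - pi1 p r t) t) = (\<lambda>w. dK y r w - dK y (\<lambda>t. r t - pi1 p r t) w)"
    by (rule dK_diff[OF rc Rc_diff[OF rc pi1_Rc[OF rc]]])
  have "dK y (pi1 p r) w = dK y r w - dK y (\<lambda>t. r t - pi1 p r t) w"
    using fun_cong[OF e, of w] pi1_eq[of p r] by simp
  also have "dK y (\<lambda>t. r t - pi1 p r t) w = 0"
    using dK_vanish[OF Rge_diff_pi1[OF assms(1)]] assms(2) by simp
  finally show ?thesis by simp
qed

lemma SyzK_to_SyzA: "r \<in> SyzK y p \<Longrightarrow> pi1 p r \<in> SyzA y p"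
  unfolding SyzK_def SyzA_def dA_def
proof safe
  assume r: "r \<in> Rge p" "dK y r = (\<lambda>_. 0)"
  show "pi1 p r \<in> Rdeg p" using pi1_Rdeg Rge_Rc r by blast
  show "pi0 p (dK y (pi1 p r)) = (\<lambda>_. 0)"
    unfolding pi0_def using dK_pi1_deg[OF r(1)] r(2) by (auto simp: fun_eq_iff)
qed

lemma dir1:
  fixes y :: "'q \<Rightarrow> 'x ser"
  assumes y: "\<forall>q. y q \<in> Fc" and surj: "\<forall>k. 2 \<le> k \<and> k < p \<longrightarrow> piSyz_surj y k"
  shows "\<forall>r. p - d \<ge> 2 \<longrightarrow> r \<in> Rge (p - d) \<longrightarrow> dK y r \<in> IF p \<longrightarrow> (\<exists>r'\<in>Rge p. dK y r' = dK y r)"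
proof (induction d)
  case 0
  then show ?case by auto
next
  case (Suc d)
  show ?case
  proof (intro allI impI)
    fix r assume k2: "2 \<le> p - Suc d" and r: "r \<in> Rge (p - Suc d)" and m: "dK y r \<in> IF p"
    define k where "k = p - Suc d"
    have kp: "k < p" "Suc k = p - d" using k2 unfolding k_def by auto
    have rk: "r \<in> Rge k" using r k_def by simp
    have "pi1 k r \<in> SyzA y k"
      unfolding SyzA_def dA_def
    proof safe
      show "pi1 k r \<in> Rdeg k" using pi1_Rdeg Rge_Rc rk by blast
      show "pi0 k (dK y (pi1 k r)) = (\<lambda>_. 0)"
        unfolding pi0_def using dK_pi1_deg[OF rk] m kp(1) unfolding IF_def by (auto simp: fun_eq_iff)
    qed
    moreover have "piSyz_surj y k" using surj k2 kp unfolding k_def by auto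
    ultimately obtain z where z: "z \<in> SyzK y k" "pi1 k z = pi1 k r"
      unfolding piSyz_surj_def by (metis imageE)
    have zR: "z \<in> Rge k" and z0: "dK y z = (\<lambda>_. 0)" using z(1) unfolding SyzK_def by auto
    have "(\<lambda>t. r t - z t) \<in> Rge (Suc k)"
      unfolding Rge_def
    proof safe
      show "(\<lambda>t. r t - z t) \<in> Rc" using Rc_diff Rge_Rc rk zR by blast
      fix t :: "'x list \<times> 'q \<times> 'x list" assume "rdeg t < Suc k"
      moreover have "rdeg t = k \<Longrightarrow> r t = z t" using fun_cong[OF z(2), of t] by (simp add: pi1_def)
      moreover have "rdeg t < k \<Longrightarrow> r t = 0 \<and> z t = 0" using rk zR unfolding Rge_def by blast
      ultimately show "r t - z t = 0" by (cases "rdeg t = k") auto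
    qed
    moreover have "dK y (\<lambda>t. r t - z t) = dK y r"
      using dK_diff[OF Rge_Rc[OF rk] Rge_Rc[OF zR]] z0 by simp
    moreover have "2 \<le> p - d" using kp k2 k_def by simp
    ultimately show "\<exists>r'\<in>Rge p. dK y r' = dK y r"
      using Suc.IH kp(2) m by (metis (no_types, lifting))
  qed
qed

lemma dir1':
  assumes y: "\<forall>q. y q \<in> Fc" and surj: "\<forall>k\<ge>2. piSyz_surj y k" and p: "p \<ge> 2"
  shows "dK y ` Rge p = Mid y \<inter> IF p"
proof
  show "dK y ` Rge p \<subseteq> Mid y \<inter> IF p" unfolding Mid_def using dK_IF[OF y] Rge_Rc by blast
  show "Mid y \<inter> IF p \<subseteq> dK y ` Rge p"
  proof
    fix m assume "m \<in> Mid y \<inter> IF p"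
    then obtain r where r: "r \<in> Rc" "m = dK y r" "m \<in> IF p" unfolding Mid_def by auto
    have "\<exists>r'\<in>Rge p. dK y r' = dK y r"
      using dir1[OF y, of p "p - 2"] surj r p Rc_Rge2 by auto
    thus "m \<in> dK y ` Rge p" using r by (metis image_eqI)
  qed
qed

lemma dir2:
  fixes y :: "'q \<Rightarrow> 'x ser"
  assumes y: "\<forall>q. y q \<in> Fc" and eq: "dK y ` Rge (Suc p) = Mid y \<inter> IF (Suc p)"
  shows "piSyz_surj y p"
  unfolding piSyz_surj_def
proof
  show "pi1 p ` SyzK y p \<subseteq> SyzA y p" using SyzK_to_SyzA by blast
  show "SyzA y p \<subseteq> pi1 p ` SyzK y p"
  proof
    fix s assume "s \<in> SyzA y p"
    hence s: "s \<in> Rdeg p" "pi0 p (dK y s) = (\<lambda>_. 0)" unfolding SyzA_def dA_def by auto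
    have sR: "s \<in> Rge p" using s(1) unfolding Rdeg_def Rge_def by auto
    have "dK y s \<in> IF (Suc p)"
      unfolding IF_def
    proof safe
      show "dK y s \<in> Fc" using dK_Fc[OF y] Rge_Rc[OF sR] .
      fix w :: "'x list" assume "length w < Suc p"
      thus "dK y s w = 0" using dK_vanish[OF sR] fun_cong[OF s(2), of w]
        by (cases "length w = p") (auto simp: pi0_def)
    qed
    moreover have "dK y s \<in> Mid y" unfolding Mid_def using Rge_Rc[OF sR] by blast
    ultimately obtain r' where r': "r' \<in> Rge (Suc p)" "dK y r' = dK y s" using eq by force
    define r where "r = (\<lambda>t. s t - r' t)"
    have "r \<in> SyzK y p"
      unfolding SyzK_def r_def
    proof safe
      show "(\<lambda>t. s t - r' t) \<in> Rge p"
        using Rc_diff[OF Rge_Rc[OF sR] Rge_Rc[OF r'(1)]] sR r'(1) unfolding Rge_def by auto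
      show "dK y (\<lambda>t. s t - r' t) = (\<lambda>_. 0)"
        using dK_diff[OF Rge_Rc[OF sR] Rge_Rc[OF r'(1)]] r'(2) by simp
    qed
    moreover have "pi1 p r = s"
      using s(1) r'(1) unfolding pi1_def r_def Rdeg_def Rge_def by (auto simp: fun_eq_iff)
    ultimately show "s \<in> pi1 p ` SyzK y p" by force
  qed
qed


lemma cls_eq:
  fixes S U :: "'x ser set"
  assumes cl: "\<And>a b. a \<in> S \<Longrightarrow> b \<in> S \<Longrightarrow> (\<lambda>w. a w - b w) \<in> S" and z: "(\<lambda>_. 0) \<in> S"
    and f: "f \<in> U" and g: "g \<in> U"
  shows "({h\<in>U. (\<lambda>w. h w - f w) \<in> S} = {h\<in>U. (\<lambda>w. h w - g w) \<in> S}) \<longleftrightarrow> (\<lambda>w. f w - g w) \<in> S"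
proof
  assume "{h\<in>U. (\<lambda>w. h w - f w) \<in> S} = {h\<in>U. (\<lambda>w. h w - g w) \<in> S}"
  moreover have "f \<in> {h\<in>U. (\<lambda>w. h w - f w) \<in> S}" using f z by simp
  ultimately show "(\<lambda>w. f w - g w) \<in> S" by blast
next
  assume fg: "(\<lambda>w. f w - g w) \<in> S"
  have gf: "(\<lambda>w. g w - f w) \<in> S" using cl[OF z fg] by simp
  have "\<And>h. (\<lambda>w. h w - f w) \<in> S \<longleftrightarrow> (\<lambda>w. h w - g w) \<in> S"
  proof
    fix h assume "(\<lambda>w. h w - f w) \<in> S"
    from cl[OF this gf] show "(\<lambda>w. h w - g w) \<in> S" by simp
  next
    fix h assume "(\<lambda>w. h w - g w) \<in> S"
    from cl[OF this fg] show "(\<lambda>w. h w - f w) \<in> S" by simp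
  qed
  thus "{h\<in>U. (\<lambda>w. h w - f w) \<in> S} = {h\<in>U. (\<lambda>w. h w - g w) \<in> S}" by blast
qed

lemma Fc_diff: "f \<in> Fc \<Longrightarrow> g \<in> Fc \<Longrightarrow> (\<lambda>w. f w - g w) \<in> Fc"
  unfolding Fc_def
proof safe
  fix n assume a: "\<forall>n. finite {w. length w = n \<and> f w \<noteq> 0}" "\<forall>n. finite {w. length w = n \<and> g w \<noteq> 0}"
  have "{w. length w = n \<and> f w - g w \<noteq> 0} \<subseteq> {w. length w = n \<and> f w \<noteq> 0} \<union> {w. length w = n \<and> g w \<noteq> 0}"
    by auto
  thus "finite {w. length w = n \<and> f w - g w \<noteq> 0}" using a by (meson finite_UnI rev_finite_subset)
qed

lemma IF_diff: assumes "f \<in> IF p" "g \<in> IF p" shows "(\<lambda>w. f w - g w) \<in> IF p"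
proof -
  have "f \<in> Fc" "g \<in> Fc" using assms unfolding IF_def by auto
  hence "(\<lambda>w. f w - g w) \<in> Fc" by (rule Fc_diff)
  moreover have "\<forall>w. length w < p \<longrightarrow> f w - g w = 0" using assms unfolding IF_def by auto
  ultimately show ?thesis unfolding IF_def by blast
qed

lemma Mid_diff:
  assumes "a \<in> Mid y" "b \<in> Mid y" shows "(\<lambda>w. a w - b w) \<in> Mid y"
proof -
  obtain r s where rs: "r \<in> Rc" "s \<in> Rc" "a = dK y r" "b = dK y s" using assms unfolding Mid_def by blast
  have "(\<lambda>w. a w - b w) = dK y (\<lambda>t. r t - s t)" using dK_diff[OF rs(1,2)] rs(3,4) by simp
  thus ?thesis unfolding Mid_def using Rc_diff[OF rs(1,2)] by (rule image_eqI)
qed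

lemma Rge_diff: fixes a b :: "('x,'q) rser" assumes "a \<in> Rge p" "b \<in> Rge p" shows "(\<lambda>t. a t - b t) \<in> Rge p"
proof -
  have "(\<lambda>t. a t - b t) \<in> Rc" using Rc_diff[OF Rge_Rc[OF assms(1)] Rge_Rc[OF assms(2)]] .
  moreover have "\<forall>t. rdeg t < p \<longrightarrow> a t - b t = 0"
  proof (intro allI impI)
    fix t :: "'x list \<times> 'q \<times> 'x list" assume "rdeg t < p"
    moreover have "\<And>t. rdeg t < p \<Longrightarrow> a t = 0" "\<And>t. rdeg t < p \<Longrightarrow> b t = 0"
      using assms unfolding Rge_def by blast+
    ultimately show "a t - b t = 0" by (metis diff_self)
  qed
  ultimately show ?thesis unfolding Rge_def by blast
qed

lemma D_diff:
  assumes "a \<in> dK y ` Rge p" "b \<in> dK y ` Rge p" shows "(\<lambda>w. a w - b w) \<in> dK y ` Rge p"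
proof -
  obtain r s where rs: "r \<in> Rge p" "s \<in> Rge p" "a = dK y r" "b = dK y s" using assms by blast
  have "(\<lambda>w. a w - b w) = dK y (\<lambda>t. r t - s t)" using dK_diff[OF Rge_Rc[OF rs(1)] Rge_Rc[OF rs(2)]] rs(3,4) by simp
  thus ?thesis using Rge_diff[OF rs(1,2)] by (rule image_eqI)
qed

lemma zero_Rge: "(\<lambda>_. 0) \<in> Rge p" unfolding Rge_def Rc_def by auto
lemma zero_Rc: "(\<lambda>_. 0) \<in> Rc" unfolding Rc_def by auto

lemma zero_D: "(\<lambda>_. 0) \<in> dK y ` Rge p"
  by (rule image_eqI[where x="\<lambda>_. 0"]) (simp_all add: dK_zero zero_Rge)

lemma zero_Mid: "(\<lambda>_. 0) \<in> Mid y"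
  unfolding Mid_def by (rule image_eqI[where x="\<lambda>_. 0"]) (simp_all add: dK_zero zero_Rc)

lemma quot:
  assumes eq: "dK y ` Rge p = Mid y \<inter> IF p"
  shows "\<exists>\<phi>. bij_betw \<phi> (IFquot y p) (IK y p) \<and> (\<forall>f\<in>IF p. \<phi> (Dcls y p f) = Kcls y f)"
proof -
  have key: "Dcls y p f = Dcls y p g \<longleftrightarrow> Kcls y f = Kcls y g" if f: "f \<in> IF p" and g: "g \<in> IF p" for f g
  proof -
    have "Dcls y p f = Dcls y p g \<longleftrightarrow> (\<lambda>w. f w - g w) \<in> dK y ` Rge p"
      unfolding Dcls_def
      by (rule cls_eq[OF D_diff zero_D f g])
    also have "\<dots> \<longleftrightarrow> (\<lambda>w. f w - g w) \<in> Mid y" using eq IF_diff[OF f g] by blast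
    also have "\<dots> \<longleftrightarrow> Kcls y f = Kcls y g"
    proof -
      have fF: "f \<in> Fc" and gF: "g \<in> Fc" using f g unfolding IF_def by auto
      have "(Kcls y f = Kcls y g) = ((\<lambda>w. f w - g w) \<in> Mid y)"
        unfolding Kcls_def by (rule cls_eq[OF Mid_diff zero_Mid fF gF])
      thus ?thesis by simp
    qed
    finally show ?thesis .
  qed
  define \<phi> where "\<phi> X = Kcls y (SOME f. f \<in> IF p \<and> Dcls y p f = X)" for X
  have phi: "\<phi> (Dcls y p f) = Kcls y f" if f: "f \<in> IF p" for f
  proof -
    define g where "g = (SOME g. g \<in> IF p \<and> Dcls y p g = Dcls y p f)"
    have "\<exists>g. g \<in> IF p \<and> Dcls y p g = Dcls y p f" using f by blast
    hence g: "g \<in> IF p \<and> Dcls y p g = Dcls y p f" unfolding g_def by (rule someI_ex)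
    have "Kcls y g = Kcls y f" using key[of g f] g f by simp
    moreover have "\<phi> (Dcls y p f) = Kcls y g" unfolding \<phi>_def g_def by simp
    ultimately show ?thesis by simp
  qed
  have "inj_on \<phi> (IFquot y p)"
  proof (rule inj_onI)
    fix X X' assume "X \<in> IFquot y p" "X' \<in> IFquot y p" and e: "\<phi> X = \<phi> X'"
    then obtain f g where fg: "f \<in> IF p" "g \<in> IF p" "X = Dcls y p f" "X' = Dcls y p g"
      unfolding IFquot_def by blast
    have "Kcls y f = Kcls y g" using e phi[OF fg(1)] phi[OF fg(2)] fg(3,4) by simp
    thus "X = X'" using key[OF fg(1,2)] fg(3,4) by simp
  qed
  moreover have "\<phi> ` IFquot y p = IK y p"
  proof
    show "\<phi> ` IFquot y p \<subseteq> IK y p"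
    proof
      fix Z assume "Z \<in> \<phi> ` IFquot y p"
      then obtain f where f: "f \<in> IF p" "Z = \<phi> (Dcls y p f)" unfolding IFquot_def by blast
      hence "Z = Kcls y f" using phi by simp
      thus "Z \<in> IK y p" unfolding IK_def using f(1) by (rule image_eqI)
    qed
    show "IK y p \<subseteq> \<phi> ` IFquot y p"
    proof
      fix Z assume "Z \<in> IK y p"
      then obtain f where f: "f \<in> IF p" "Z = Kcls y f" unfolding IK_def by blast
      hence "Z = \<phi> (Dcls y p f)" using phi by simp
      moreover have "Dcls y p f \<in> IFquot y p" unfolding IFquot_def using f(1) by (rule imageI)
      ultimately show "Z \<in> \<phi> ` IFquot y p" by (rule image_eqI)
    qed
  qed
  ultimately have "bij_betw \<phi> (IFquot y p) (IK y p)" unfolding bij_betw_def by blast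
  thus ?thesis using phi by blast
qed

theorem proposition3p2:
  fixes y :: "'q \<Rightarrow> 'x list \<Rightarrow> rat"
  assumes "\<forall>q. y q \<in> IF 2"
  shows "((\<forall>p\<ge>2. piSyz_surj y p) \<longleftrightarrow> (\<forall>p\<ge>2. dK y ` Rge p = Mid y \<inter> IF p))
    \<and> ((\<forall>p\<ge>2. dK y ` Rge p = Mid y \<inter> IF p) \<longrightarrow>
       (\<forall>p\<ge>2. \<exists>\<phi>. bij_betw \<phi> (IFquot y p) (IK y p) \<and>
                   (\<forall>f\<in>IF p. \<phi> (Dcls y p f) = Kcls y f)))"
proof -
  have y: "\<forall>q. y q \<in> Fc" using assms unfolding IF_def by auto
  have A: "(\<forall>p\<ge>2. piSyz_surj y p) \<longleftrightarrow> (\<forall>p\<ge>2. dK y ` Rge p = Mid y \<inter> IF p)"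
  proof
    assume "\<forall>p\<ge>2. piSyz_surj y p"
    thus "\<forall>p\<ge>2. dK y ` Rge p = Mid y \<inter> IF p" using dir1'[OF y] by blast
  next
    assume h: "\<forall>p\<ge>2. dK y ` Rge p = Mid y \<inter> IF p"
    show "\<forall>p\<ge>2. piSyz_surj y p"
    proof (intro allI impI)
      fix p :: nat assume "2 \<le> p"
      hence "dK y ` Rge (Suc p) = Mid y \<inter> IF (Suc p)" using h by simp
      thus "piSyz_surj y p" by (rule dir2[OF y])
    qed
  qed
  show ?thesis
  proof (rule conjI[OF A], intro impI allI)
    fix p :: nat assume h: "\<forall>p\<ge>2. dK y ` Rge p = Mid y \<inter> IF p" and p: "2 \<le> p"
    show "\<exists>\<phi>. bij_betw \<phi> (IFquot y p) (IK y p) \<and> (\<forall>f\<in>IF p. \<phi> (Dcls y p f) = Kcls y f)"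
      using h p by (intro quot) simp
  qed
qed

end
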